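(* Let $p>1$, $p'=\frac{p}{p-1}$, $\Omega=\{x\in\mathbb{R}^2\;;\;|x|>1\}$, and let $\psi_R,\psi_R^*,P(R)$ be as in the context. Let $\delta>0$, $C_0>0$, $R_1>0$, $\theta\ge0$, $\kappa\in\mathbb{R}$, $T>R_1$, and $0\le w\in L^1_{\rm loc}([0,T);L^1(\Omega))$. Assume that for every $R\in[R_1,T)$, \[ \delta+\iint_{P(R)}w(x,t)\psi_R(x,t)\,dx\,dt\le C_0R^{-\frac{\theta}{p'}}(\log R)^{\frac{\kappa}{p'}}\left(\iint_{P(R)}w(x,t)\psi_R^*(x,t)\,dx\,dt\right)^{\frac1p}. \] Then, with a constant $C>0$ independent of $\delta$ (and for $\delta$ sufficiently small), \[ T\le\begin{cases} C\delta^{-\frac1\theta}(\log(\delta^{-1}))^{\frac{\kappa}{\theta}} & \text{if } \theta>0,\ \kappa\in\mathbb{R},\\[3pt] \exp\big(C\delta^{-\frac{p-1}{1-\kappa(p-1)}}\big) & \text{if } \theta=0,\ \kappa<\frac{1}{p-1},\\[3pt] \exp\exp\big(C\delta^{-(p-1)}\big) & \text{if } \theta=0,\ \kappa=\frac1{p-1}. \end{cases} \]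
   Context: Fix $\eta\in C^2([0,\infty))$ with $\eta=1$ on $[0,1/2]$, $\eta$ decreasing on $(1/2,1)$, $\eta=0$ on $[1,\infty)$; let $\eta^*(s)=0$ for $s\in[0,1/2)$ and $\eta^*(s)=\eta(s)$ for $s\ge1/2$. For $R>0$ set $s_R(x,t)=\frac{(|x|-1)^2+t}{R}$, $\psi_R(x,t)=[\eta(s_R(x,t))]^{2p'}$, $\psi_R^*(x,t)=[\eta^*(s_R(x,t))]^{2p'}$ for $(x,t)\in\Omega\times[0,\infty)$, and $P(R)=\{(x,t)\in\Omega\times[0,\infty)\;;\;(|x|-1)^2+t\le R\}$. *)

theory Defs
  imports "HOL-Analysis.Analysis"
begin

definition Omega :: "(real^2) set" where
  "Omega = {x. norm x > 1}"

definition conj_exp :: "real \<Rightarrow> real" where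
  "conj_exp p = p / (p - 1)"

definition cutoff :: "(real \<Rightarrow> real) \<Rightarrow> bool" where
  "cutoff \<eta> \<longleftrightarrow>
     (\<exists>\<eta>1 \<eta>2. (\<forall>s\<ge>0. (\<eta> has_real_derivative \<eta>1 s) (at s within {0..}))
            \<and> (\<forall>s\<ge>0. (\<eta>1 has_real_derivative \<eta>2 s) (at s within {0..}))
            \<and> continuous_on {0..} \<eta>2)
   \<and> (\<forall>s\<in>{0..1/2}. \<eta> s = 1)
   \<and> (\<forall>s t. 1/2 < s \<and> s \<le> t \<and> t < 1 \<longrightarrow> \<eta> t \<le> \<eta> s)
   \<and> (\<forall>s\<ge>1. \<eta> s = 0)"

definition eta_star :: "(real \<Rightarrow> real) \<Rightarrow> real \<Rightarrow> real" where
  "eta_star \<eta> s = (if s < 1/2 then 0 else \<eta> s)"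

definition sR :: "real \<Rightarrow> (real^2) \<Rightarrow> real \<Rightarrow> real" where
  "sR R x t = ((norm x - 1)^2 + t) / R"

definition psiR :: "(real \<Rightarrow> real) \<Rightarrow> real \<Rightarrow> real \<Rightarrow> (real^2) \<Rightarrow> real \<Rightarrow> real" where
  "psiR \<eta> p R x t = (\<eta> (sR R x t)) powr (2 * conj_exp p)"

definition psiR_star :: "(real \<Rightarrow> real) \<Rightarrow> real \<Rightarrow> real \<Rightarrow> (real^2) \<Rightarrow> real \<Rightarrow> real" where
  "psiR_star \<eta> p R x t = (eta_star \<eta> (sR R x t)) powr (2 * conj_exp p)"

definition PR :: "real \<Rightarrow> ((real^2) \<times> real) set" where
  "PR R = {(x, t). x \<in> Omega \<and> 0 \<le> t \<and> (norm x - 1)^2 + t \<le> R}"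

end

theory Submission
  imports Defs
begin


lemma cutoff_cont:
  assumes "cutoff \<eta>" shows "continuous_on {0..} \<eta>"
proof -
  from assms obtain \<eta>1 where d: "\<forall>s\<ge>0. (\<eta> has_real_derivative \<eta>1 s) (at s within {0..})"
    unfolding cutoff_def by blast
  show ?thesis unfolding continuous_on_eq_continuous_within
    using d DERIV_continuous by (metis atLeast_iff)
qed

lemma cutoff_bounds:
  assumes "cutoff \<eta>" "s \<ge> 0" shows "0 \<le> \<eta> s \<and> \<eta> s \<le> 1"
proof -
  have c: "continuous_on {0..} \<eta>" using cutoff_cont[OF assms(1)] .
  have h1: "\<forall>s\<in>{0..1/2}. \<eta> s = 1" and hm: "\<forall>s t. 1/2 < s \<and> s \<le> t \<and> t < 1 \<longrightarrow> \<eta> t \<le> \<eta> s"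
    and h0: "\<forall>s\<ge>1. \<eta> s = 0" using assms(1) unfolding cutoff_def by blast+
  consider "s \<le> 1/2" | "s \<ge> 1" | "1/2 < s" "s < 1" by linarith
  then show ?thesis
  proof cases
    case 1 then show ?thesis using h1 assms(2) by auto
  next
    case 2 then show ?thesis using h0 by auto
  next
    case 3
    have a: "0 \<le> \<eta> s"
    proof (rule ccontr)
      assume neg: "\<not> 0 \<le> \<eta> s"
      obtain d where d: "d > 0" "\<forall>x'\<in>{0..}. dist x' 1 < d \<longrightarrow> dist (\<eta> x') (\<eta> 1) < - \<eta> s"
        using c[unfolded continuous_on_iff, rule_format, of 1 "- \<eta> s"] neg by force
      define t where "t = max s (1 - d/2)"
      have t: "s \<le> t" "t < 1" "0 \<le> t" "dist t 1 < d" using d 3 unfolding t_def dist_real_def by auto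
      have "\<eta> t \<le> \<eta> s" using hm 3 t by blast
      moreover have "dist (\<eta> t) (\<eta> 1) < - \<eta> s" using d t by auto
      ultimately show False using h0 by (auto simp: dist_real_def)
    qed
    have b: "\<eta> s \<le> 1"
    proof (rule ccontr)
      assume neg: "\<not> \<eta> s \<le> 1"
      obtain d where d: "d > 0" "\<forall>x'\<in>{0..}. dist x' (1/2) < d \<longrightarrow> dist (\<eta> x') (\<eta> (1/2)) < \<eta> s - 1"
        using c[unfolded continuous_on_iff, rule_format, of "1/2" "\<eta> s - 1"] neg by force
      define t where "t = min s (1/2 + d/2)"
      have t: "t \<le> s" "1/2 < t" "0 \<le> t" "dist t (1/2) < d" using d 3 unfolding t_def dist_real_def by auto
      have "\<eta> s \<le> \<eta> t" using hm 3 t by blast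
      moreover have "dist (\<eta> t) (\<eta> (1/2)) < \<eta> s - 1" using d t by auto
      ultimately show False using h1 by (auto simp: dist_real_def)
    qed
    show ?thesis using a b by simp
  qed
qed



lemma step_real:
  fixes p \<delta> A I0 I1 I2 J :: real
  assumes p: "p > 1" and d: "\<delta> > 0" and A: "A > 0" and "I0 \<ge> 0" "I1 \<ge> 0" "J \<ge> 0"
    and h: "\<delta> + I1 \<le> A * J powr (1/p)" and a: "J + I0 \<le> I2" and m: "I0 \<le> I1" and j: "J \<le> I1"
  shows "\<delta> + I2 \<ge> (\<delta> + I0) + (\<delta> + I0) powr p / A powr p"
    and "(\<delta> + I0) powr (p - 1) \<le> A powr p"
proof -
  define v where "v = \<delta> + I1"
  have v: "v > 0" using d assms unfolding v_def by simp
  have "v / A \<le> J powr (1/p)" using h A unfolding v_def by (simp add: field_simps)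
  then have "(v / A) powr p \<le> (J powr (1/p)) powr p"
    using v A p by (intro powr_mono2) auto
  also have "\<dots> = J" using p \<open>J \<ge> 0\<close> by (simp add: powr_powr)
  finally have Jv: "v powr p / A powr p \<le> J" by (simp add: powr_divide)
  have "(\<delta> + I0) powr p \<le> v powr p" using p assms unfolding v_def by (intro powr_mono2) auto
  then have "(\<delta> + I0) powr p / A powr p \<le> v powr p / A powr p" using A by (simp add: divide_right_mono)
  then show "\<delta> + I2 \<ge> (\<delta> + I0) + (\<delta> + I0) powr p / A powr p" using Jv a by linarith
  have "J powr (1/p) \<le> I1 powr (1/p)" using j p \<open>J \<ge> 0\<close> by (intro powr_mono2) auto
  also have "\<dots> \<le> v powr (1/p)" using p assms unfolding v_def by (intro powr_mono2) auto
  finally have "v \<le> A * v powr (1/p)" using h A unfolding v_def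
    by (smt (verit) mult_left_mono)
  moreover have "v = v powr (1/p) * v powr (1 - 1/p)" using v by (simp add: powr_add[symmetric])
  ultimately have "v powr (1/p) * v powr (1 - 1/p) \<le> v powr (1/p) * A" by (simp add: mult.commute)
  then have "v powr (1 - 1/p) \<le> A" using v by simp
  then have "(v powr (1 - 1/p)) powr p \<le> A powr p" using p by (intro powr_mono2) auto
  also have "(v powr (1 - 1/p)) powr p = v powr (p - 1)"
  proof -
    have "(1 - 1/p) * p = p - 1" using p by (simp add: field_simps)
    then show ?thesis by (simp add: powr_powr)
  qed
  finally have vA: "v powr (p - 1) \<le> A powr p" .
  have "(\<delta> + I0) powr (p - 1) \<le> v powr (p - 1)" using p assms unfolding v_def by (intro powr_mono2) auto
  then show "(\<delta> + I0) powr (p - 1) \<le> A powr p" using vA by linarith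
qed

lemma mvt_powr:
  fixes p u u' :: real
  assumes p: "p > 1" and u: "0 < u" "u \<le> u'"
  shows "u powr (1 - p) - u' powr (1 - p) \<ge> (p - 1) * (u' - u) * u' powr (- p)"
proof (cases "u = u'")
  case True then show ?thesis by simp
next
  case False
  then have lt: "u < u'" using u by simp
  have der: "\<And>x. u \<le> x \<Longrightarrow> x \<le> u' \<Longrightarrow> DERIV (\<lambda>x. x powr (1 - p)) x :> (1 - p) * x powr (1 - p - 1)"
    using u by (intro has_real_derivative_powr) auto
  obtain z where z: "u < z" "z < u'" and eq: "u' powr (1 - p) - u powr (1 - p) = (u' - u) * ((1 - p) * z powr (1 - p - 1))"
    using MVT2[OF lt der] by blast
  have "u' powr (- p) \<le> z powr (- p)" using z u p by (intro powr_mono2') auto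
  then have "(p - 1) * (u' - u) * u' powr (- p) \<le> (p - 1) * (u' - u) * z powr (- p)"
    using p lt by (intro mult_left_mono) auto
  also have "\<dots> = u powr (1 - p) - u' powr (1 - p)" using eq by (simp add: algebra_simps)
  finally show ?thesis .
qed

definition cst :: "real \<Rightarrow> real" where
  "cst p = min ((p - 1) * 2 powr (- p)) (1 - 2 powr (1 - p))"

lemma cst_pos: "p > 1 \<Longrightarrow> cst p > 0"
  unfolding cst_def by (auto simp: powr_less_one)

lemma g_step:
  fixes p u u' B :: real
  assumes p: "p > 1" and u: "u > 0" and B: "B > 0" and s: "u' \<ge> u + u powr p / B"
    and ub: "u powr (p - 1) \<le> B"
  shows "u powr (1 - p) - u' powr (1 - p) \<ge> cst p / B"
proof -
  have uu: "u \<le> u'" using s u B by (smt (verit) divide_nonneg_pos powr_ge_zero)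
  show ?thesis
  proof (cases "u' \<le> 2 * u")
    case True
    have "(p - 1) * 2 powr (- p) / B = (p - 1) * (u powr p / B) * (2 * u) powr (- p)"
    proof -
      have "u powr p > 0" using u by simp
      then show ?thesis using B by (simp add: powr_mult powr_minus field_simps)
    qed
    also have "\<dots> \<le> (p - 1) * (u' - u) * (2 * u) powr (- p)"
      using s p by (intro mult_right_mono mult_left_mono) auto
    also have "\<dots> \<le> (p - 1) * (u' - u) * u' powr (- p)"
      using True p u uu by (intro mult_left_mono powr_mono2') auto
    also have "\<dots> \<le> u powr (1 - p) - u' powr (1 - p)" using mvt_powr[OF p u uu] .
    finally have "(p - 1) * 2 powr (- p) / B \<le> u powr (1 - p) - u' powr (1 - p)" .
    moreover have "cst p / B \<le> (p - 1) * 2 powr (- p) / B" unfolding cst_def using B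
      by (intro divide_right_mono) auto
    ultimately show ?thesis by linarith
  next
    case False
    have "u' powr (1 - p) \<le> (2 * u) powr (1 - p)" using False p u by (intro powr_mono2') auto
    also have "\<dots> = 2 powr (1 - p) * u powr (1 - p)" by (simp add: powr_mult)
    finally have a: "u powr (1 - p) - u' powr (1 - p) \<ge> (1 - 2 powr (1 - p)) * u powr (1 - p)"
      by (simp add: algebra_simps)
    have "u powr (1 - p) = 1 / u powr (p - 1)" using u by (simp add: powr_minus_divide[symmetric])
    also have "\<dots> \<ge> 1 / B" using ub u B by (intro divide_left_mono) auto
    finally have b: "u powr (1 - p) \<ge> 1 / B" .
    have c0: "0 \<le> 1 - 2 powr (1 - p)" using p by (auto simp: powr_less_one less_imp_le)
    have "cst p / B \<le> (1 - 2 powr (1 - p)) * (1 / B)" unfolding cst_def using B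
      by (simp add: divide_right_mono)
    also have "\<dots> \<le> (1 - 2 powr (1 - p)) * u powr (1 - p)" using b c0 by (intro mult_left_mono)
    finally show ?thesis using a by linarith
  qed
qed

lemma tele:
  fixes p \<delta> :: real and u B :: "nat \<Rightarrow> real"
  assumes p: "p > 1" and d: "\<delta> > 0" and u0: "u 0 \<ge> \<delta>"
    and st: "\<And>k. k < K \<Longrightarrow> B k > 0 \<and> u (Suc k) \<ge> u k + u k powr p / B k \<and> u k powr (p - 1) \<le> B k"
  shows "(\<Sum>k<K. cst p / B k) \<le> \<delta> powr (1 - p)"
proof -
  have "\<And>n. n \<le> K \<Longrightarrow> u n \<ge> \<delta> \<and> u n powr (1 - p) + (\<Sum>k<n. cst p / B k) \<le> u 0 powr (1 - p)"
  proof -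
    fix n show "n \<le> K \<Longrightarrow> u n \<ge> \<delta> \<and> u n powr (1 - p) + (\<Sum>k<n. cst p / B k) \<le> u 0 powr (1 - p)"
    proof (induction n)
      case 0 then show ?case using u0 by simp
    next
      case (Suc n)
      then have IH: "u n \<ge> \<delta>" "u n powr (1 - p) + (\<Sum>k<n. cst p / B k) \<le> u 0 powr (1 - p)" by auto
      have s: "B n > 0" "u (Suc n) \<ge> u n + u n powr p / B n" "u n powr (p - 1) \<le> B n"
        using st[of n] Suc.prems by auto
      have "u (Suc n) \<ge> u n" using s by (smt (verit) divide_nonneg_pos powr_ge_zero)
      moreover have "u n powr (1 - p) - u (Suc n) powr (1 - p) \<ge> cst p / B n"
        using g_step[OF p _ s(1) s(2) s(3)] IH d by auto
      ultimately show ?case using IH by simp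
    qed
  qed
  from this[of K] have "u K powr (1 - p) + (\<Sum>k<K. cst p / B k) \<le> u 0 powr (1 - p)" by simp
  moreover have "u 0 powr (1 - p) \<le> \<delta> powr (1 - p)" using u0 d p by (intro powr_mono2') auto
  moreover have "u K powr (1 - p) \<ge> 0" by simp
  ultimately show ?thesis by linarith
qed



definition etap :: "(real \<Rightarrow> real) \<Rightarrow> real \<Rightarrow> real" where
  "etap \<eta> s = \<eta> (max 0 s)"

definition rho :: "(real^2) \<times> real \<Rightarrow> real" where
  "rho z = (norm (fst z) - 1)^2 + snd z"

definition psip :: "(real \<Rightarrow> real) \<Rightarrow> real \<Rightarrow> real \<Rightarrow> (real^2) \<times> real \<Rightarrow> real" where
  "psip \<eta> p R z = etap \<eta> (rho z / R) powr (2 * conj_exp p)"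

definition psisp :: "(real \<Rightarrow> real) \<Rightarrow> real \<Rightarrow> real \<Rightarrow> (real^2) \<times> real \<Rightarrow> real" where
  "psisp \<eta> p R z = (if rho z / R < 1/2 then 0 else etap \<eta> (rho z / R)) powr (2 * conj_exp p)"

lemma etap_cont: "cutoff \<eta> \<Longrightarrow> continuous_on UNIV (etap \<eta>)"
  unfolding etap_def
  by (rule continuous_on_compose2[OF cutoff_cont]) (auto intro!: continuous_intros)

lemma rho_meas [measurable]: "rho \<in> borel_measurable borel"
  unfolding rho_def by (intro borel_measurable_continuous_onI continuous_intros)

lemma snd_meas [measurable]: "(snd :: (real^2) \<times> real \<Rightarrow> real) \<in> borel_measurable borel"
  by (intro borel_measurable_continuous_onI continuous_intros)

lemma nfst_meas [measurable]: "(\<lambda>z::(real^2) \<times> real. norm (fst z)) \<in> borel_measurable borel"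
  by (intro borel_measurable_continuous_onI continuous_intros)

lemma etap_meas: "cutoff \<eta> \<Longrightarrow> etap \<eta> \<in> borel_measurable borel"
  using borel_measurable_continuous_onI[OF etap_cont] .

lemma psip_meas: "cutoff \<eta> \<Longrightarrow> psip \<eta> p R \<in> borel_measurable borel"
proof -
  assume c: "cutoff \<eta>"
  have "(\<lambda>z. etap \<eta> (rho z / R)) \<in> borel_measurable borel"
    by (rule borel_measurable_continuous_on[OF etap_cont[OF c]]) measurable
  then show ?thesis unfolding psip_def by measurable
qed

lemma psisp_meas: "cutoff \<eta> \<Longrightarrow> psisp \<eta> p R \<in> borel_measurable borel"
proof -
  assume c: "cutoff \<eta>"
  have [measurable]: "(\<lambda>z. etap \<eta> (rho z / R)) \<in> borel_measurable borel"
    by (rule borel_measurable_continuous_on[OF etap_cont[OF c]]) measurable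
  show ?thesis unfolding psisp_def by measurable
qed

lemma etap_bounds: "cutoff \<eta> \<Longrightarrow> 0 \<le> etap \<eta> s \<and> etap \<eta> s \<le> 1"
  unfolding etap_def using cutoff_bounds by auto

lemma etap_one: "cutoff \<eta> \<Longrightarrow> s \<le> 1/2 \<Longrightarrow> etap \<eta> s = 1"
  unfolding etap_def cutoff_def by auto

lemma etap_zero: "cutoff \<eta> \<Longrightarrow> s \<ge> 1 \<Longrightarrow> etap \<eta> s = 0"
  unfolding etap_def cutoff_def by auto

lemma PR_meas: "PR R \<in> sets lborel"
proof -
  have "PR R = {z. 1 < norm (fst z) \<and> 0 \<le> snd z \<and> rho z \<le> R}"
    by (auto simp: PR_def Omega_def rho_def)
  also have "\<dots> \<in> sets borel" by measurable
  finally show ?thesis by simp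
qed

lemma PR_sub: "PR R \<subseteq> Omega \<times> {0..R}"
proof
  fix z assume "z \<in> PR R"
  then show "z \<in> Omega \<times> {0..R}" unfolding PR_def
    by (cases z) (auto, smt (verit) zero_le_power2)
qed

lemma int_rewrite:
  fixes w :: "real^2 \<Rightarrow> real \<Rightarrow> real"
  assumes c: "cutoff \<eta>" and R: "0 < R" "R \<le> R2"
  shows "(\<lambda>z. indicator (PR R) z *\<^sub>R (w (fst z) (snd z) * psiR \<eta> p R (fst z) (snd z)))
       = (\<lambda>z. indicator (PR R2) z * (w (fst z) (snd z) * psip \<eta> p R z))"
    and "(\<lambda>z. indicator (PR R) z *\<^sub>R (w (fst z) (snd z) * psiR_star \<eta> p R (fst z) (snd z)))
       = (\<lambda>z. indicator (PR R2) z * (w (fst z) (snd z) * psisp \<eta> p R z))"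
proof -
  have sr: "sR R (fst z) (snd z) = rho z / R" for z unfolding sR_def rho_def by simp
  have in2: "z \<in> PR R2" if "z \<in> PR R" for z using that R unfolding PR_def by auto
  have nn: "rho z \<ge> 0" if "z \<in> PR R" for z using that unfolding PR_def rho_def by auto
  have big: "rho z > R" if "z \<in> PR R2" "z \<notin> PR R" for z using that unfolding PR_def rho_def by auto
  have big1: "rho z / R \<ge> 1" if "z \<in> PR R2" "z \<notin> PR R" for z using big[OF that] R by simp
  show "(\<lambda>z. indicator (PR R) z *\<^sub>R (w (fst z) (snd z) * psiR \<eta> p R (fst z) (snd z)))
       = (\<lambda>z. indicator (PR R2) z * (w (fst z) (snd z) * psip \<eta> p R z))"
  proof
    fix z
    consider "z \<in> PR R" | "z \<in> PR R2" "z \<notin> PR R" | "z \<notin> PR R2" using in2 by blast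
    then show "indicator (PR R) z *\<^sub>R (w (fst z) (snd z) * psiR \<eta> p R (fst z) (snd z))
       = indicator (PR R2) z * (w (fst z) (snd z) * psip \<eta> p R z)"
    proof cases
      case 1 then show ?thesis using in2[OF 1] nn[OF 1] R
        by (simp add: psiR_def psip_def sr etap_def)
    next
      case 2 then show ?thesis using etap_zero[OF c big1[OF 2]]
        by (simp add: psip_def)
    next
      case 3 then have "z \<notin> PR R" using in2 by blast
      then show ?thesis using 3 by simp
    qed
  qed
  show "(\<lambda>z. indicator (PR R) z *\<^sub>R (w (fst z) (snd z) * psiR_star \<eta> p R (fst z) (snd z)))
       = (\<lambda>z. indicator (PR R2) z * (w (fst z) (snd z) * psisp \<eta> p R z))"
  proof
    fix z
    consider "z \<in> PR R" | "z \<in> PR R2" "z \<notin> PR R" | "z \<notin> PR R2" using in2 by blast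
    then show "indicator (PR R) z *\<^sub>R (w (fst z) (snd z) * psiR_star \<eta> p R (fst z) (snd z))
       = indicator (PR R2) z * (w (fst z) (snd z) * psisp \<eta> p R z)"
    proof cases
      case 1 then show ?thesis using in2[OF 1] nn[OF 1] R
        by (simp add: psiR_star_def psisp_def sr etap_def eta_star_def)
    next
      case 2 then show ?thesis using etap_zero[OF c big1[OF 2]] big1[OF 2]
        by (simp add: psisp_def)
    next
      case 3 then have "z \<notin> PR R" using in2 by blast
      then show ?thesis using 3 by simp
    qed
  qed
qed

lemma int_integrable:
  fixes w :: "real^2 \<Rightarrow> real \<Rightarrow> real" and \<phi> :: "(real^2) \<times> real \<Rightarrow> real"
  assumes wi: "\<forall>T'. 0 \<le> T' \<and> T' < T \<longrightarrow> set_integrable lborel (Omega \<times> {0..T'}) (\<lambda>(x, t). w x t)"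
    and R: "0 \<le> R2" "R2 < T" and phi: "\<phi> \<in> borel_measurable borel" and b: "\<And>z. \<bar>\<phi> z\<bar> \<le> 1"
  shows "integrable lborel (\<lambda>z. indicator (PR R2) z * (w (fst z) (snd z) * \<phi> z))"
proof -
  define f where "f = (\<lambda>z::(real^2)\<times>real. indicator (Omega \<times> {0..R2}) z *\<^sub>R (case z of (x, t) \<Rightarrow> w x t))"
  have fi: "integrable lborel f" using wi R unfolding f_def set_integrable_def by auto
  then have fm: "f \<in> borel_measurable lborel" by (rule borel_measurable_integrable)
  have eq: "(\<lambda>z. indicator (PR R2) z * (w (fst z) (snd z) * \<phi> z)) = (\<lambda>z. indicator (PR R2) z * f z * \<phi> z)"
  proof
    fix z show "indicator (PR R2) z * (w (fst z) (snd z) * \<phi> z) = indicator (PR R2) z * f z * \<phi> z"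
      using PR_sub[of R2] unfolding f_def by (cases z) (auto split: split_indicator simp: mult.assoc)
  qed
  have m1: "indicator (PR R2) \<in> borel_measurable lborel"
    using PR_meas by (intro borel_measurable_indicator) auto
  have m2: "\<phi> \<in> borel_measurable lborel" using phi by simp
  have gm: "(\<lambda>z. indicator (PR R2) z * f z * \<phi> z) \<in> borel_measurable lborel"
    using m1 fm m2 by measurable
  have "integrable lborel (\<lambda>z. indicator (PR R2) z * f z * \<phi> z)"
  proof (rule Bochner_Integration.integrable_bound[OF fi gm], rule AE_I2)
    fix z
    have "\<bar>indicator (PR R2) z * f z * \<phi> z\<bar> = \<bar>indicator (PR R2) z :: real\<bar> * \<bar>f z\<bar> * \<bar>\<phi> z\<bar>"
      by (simp add: abs_mult)
    also have "\<dots> \<le> 1 * \<bar>f z\<bar> * 1" using b[of z]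
      by (intro mult_mono) (auto split: split_indicator)
    finally show "norm (indicator (PR R2) z * f z * \<phi> z) \<le> norm (f z)" by simp
  qed
  then show ?thesis using eq by simp
qed

lemma powr01: "0 \<le> x \<Longrightarrow> x \<le> 1 \<Longrightarrow> q > 0 \<Longrightarrow> x powr q \<le> (1::real)"
  using powr_mono2[of q x 1] by simp

lemma conj_pos: "p > 1 \<Longrightarrow> 2 * conj_exp p > 0"
  unfolding conj_exp_def by simp

lemma psip_bd: "cutoff \<eta> \<Longrightarrow> p > 1 \<Longrightarrow> \<bar>psip \<eta> p R z\<bar> \<le> 1"
  unfolding psip_def using etap_bounds[of \<eta>] powr01 conj_pos by simp

lemma psisp_bd: "cutoff \<eta> \<Longrightarrow> p > 1 \<Longrightarrow> \<bar>psisp \<eta> p R z\<bar> \<le> 1"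
  unfolding psisp_def using etap_bounds[of \<eta>] powr01 conj_pos by simp

lemma pw_ineqs:
  assumes c: "cutoff \<eta>" and p: "p > 1" and M: "M > 0" and r: "rho z \<ge> 0"
  shows "psisp \<eta> p M z + psip \<eta> p (M/2) z \<le> psip \<eta> p (2*M) z"
    and "psip \<eta> p (M/2) z \<le> psip \<eta> p M z"
    and "psisp \<eta> p M z \<le> psip \<eta> p M z"
proof -
  define s where "s = rho z / M"
  define q where "q = 2 * conj_exp p"
  have q: "q > 0" using conj_pos[OF p] unfolding q_def .
  have s0: "s \<ge> 0" using r M unfolding s_def by simp
  have e1: "rho z / (M/2) = 2 * s" "rho z / (2*M) = s / 2" unfolding s_def by auto
  have le1: "etap \<eta> x powr q \<le> 1" for x using etap_bounds[OF c, of x] powr01 q by simp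
  have A: "psip \<eta> p (M/2) z = etap \<eta> (2 * s) powr q"
    "psip \<eta> p M z = etap \<eta> s powr q"
    "psip \<eta> p (2*M) z = etap \<eta> (s/2) powr q"
    "psisp \<eta> p M z = (if s < 1/2 then 0 else etap \<eta> s) powr q"
    unfolding psip_def psisp_def q_def s_def[symmetric] e1 by auto
  show "psisp \<eta> p M z + psip \<eta> p (M/2) z \<le> psip \<eta> p (2*M) z"
  proof -
    consider "s < 1/2" | "1/2 \<le> s" "s \<le> 1" | "s > 1" by linarith
    then show ?thesis
    proof cases
      case 1 then show ?thesis unfolding A using le1[of "2 * s"] etap_one[OF c, of "s/2"] s0 by simp
    next
      case 2 then show ?thesis unfolding A using le1[of s] etap_one[OF c, of "s/2"] etap_zero[OF c, of "2 * s"] by simp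
    next
      case 3 then show ?thesis unfolding A using etap_zero[OF c, of "2 * s"] etap_zero[OF c, of s] by simp
    qed
  qed
  show "psip \<eta> p (M/2) z \<le> psip \<eta> p M z"
  proof (cases "s < 1/2")
    case True then show ?thesis unfolding A using le1[of "2 * s"] etap_one[OF c, of s] by simp
  next
    case False then show ?thesis unfolding A using etap_zero[OF c, of "2 * s"] by simp
  qed
  show "psisp \<eta> p M z \<le> psip \<eta> p M z" unfolding A by simp
qed

lemma int_facts:
  fixes w :: "real^2 \<Rightarrow> real \<Rightarrow> real" and I J :: "real \<Rightarrow> real"
  assumes c: "cutoff \<eta>" and p: "p > 1"
    and wi: "\<forall>T'. 0 \<le> T' \<and> T' < T \<longrightarrow> set_integrable lborel (Omega \<times> {0..T'}) (\<lambda>(x, t). w x t)"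
    and wn: "\<forall>x\<in>Omega. \<forall>t. 0 \<le> t \<and> t < T \<longrightarrow> 0 \<le> w x t"
    and Id: "\<And>R. I R = (\<integral>z\<in>PR R. w (fst z) (snd z) * psiR \<eta> p R (fst z) (snd z) \<partial>lborel)"
    and Jd: "\<And>R. J R = (\<integral>z\<in>PR R. w (fst z) (snd z) * psiR_star \<eta> p R (fst z) (snd z) \<partial>lborel)"
    and M: "M > 0" "2 * M < T"
  shows "0 \<le> I (M/2)" "0 \<le> I M" "0 \<le> J M" "J M + I (M/2) \<le> I (2*M)" "I (M/2) \<le> I M" "J M \<le> I M"
proof -
  define R2 where "R2 = 2 * M"
  define W where "W = (\<lambda>\<phi> z. indicator (PR R2) z * (w (fst z) (snd z) * \<phi> z))"
  have Ie: "I R = integral\<^sup>L lborel (W (psip \<eta> p R))" if "0 < R" "R \<le> R2" for R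
    unfolding Id set_lebesgue_integral_def W_def int_rewrite(1)[OF c that] ..
  have Je: "J R = integral\<^sup>L lborel (W (psisp \<eta> p R))" if "0 < R" "R \<le> R2" for R
    unfolding Jd set_lebesgue_integral_def W_def int_rewrite(2)[OF c that] ..
  have int: "integrable lborel (W \<phi>)" if "\<phi> \<in> borel_measurable borel" "\<And>z. \<bar>\<phi> z\<bar> \<le> 1" for \<phi>
    unfolding W_def using int_integrable[OF wi _ _ that] M unfolding R2_def by auto
  have i1: "integrable lborel (W (psip \<eta> p R))" for R using int psip_meas[OF c] psip_bd[OF c p] by blast
  have i2: "integrable lborel (W (psisp \<eta> p R))" for R using int psisp_meas[OF c] psisp_bd[OF c p] by blast
  have Wnn: "0 \<le> W \<phi> z" if "\<And>z. 0 \<le> \<phi> z" for \<phi> z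
  proof (cases "z \<in> PR R2")
    case True
    then have "0 \<le> w (fst z) (snd z)" using wn M unfolding PR_def R2_def
      by (cases z) (auto, smt (verit) zero_le_power2)
    then show ?thesis unfolding W_def using True that by simp
  next
    case False then show ?thesis unfolding W_def by simp
  qed
  have Wmono: "W \<phi> z \<le> W g z" if "\<And>z. z \<in> PR R2 \<Longrightarrow> \<phi> z \<le> g z" for \<phi> g z
  proof (cases "z \<in> PR R2")
    case True
    then have "0 \<le> w (fst z) (snd z)" using wn M unfolding PR_def R2_def
      by (cases z) (auto, smt (verit) zero_le_power2)
    then show ?thesis unfolding W_def using True that by (simp add: mult_left_mono)
  next
    case False then show ?thesis unfolding W_def by simp
  qed
  have rho_nn: "rho z \<ge> 0" if "z \<in> PR R2" for z using that unfolding PR_def rho_def by auto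
  have R: "0 < M/2" "M/2 \<le> R2" "0 < M" "M \<le> R2" "0 < 2*M" "2*M \<le> R2" using M unfolding R2_def by auto
  show "0 \<le> I (M/2)" unfolding Ie[OF R(1,2)] by (rule integral_nonneg_AE) (auto intro!: Wnn simp: psip_def)
  show "0 \<le> I M" unfolding Ie[OF R(3,4)] by (rule integral_nonneg_AE) (auto intro!: Wnn simp: psip_def)
  show "0 \<le> J M" unfolding Je[OF R(3,4)] by (rule integral_nonneg_AE) (auto intro!: Wnn simp: psisp_def)
  have "J M + I (M/2) = integral\<^sup>L lborel (\<lambda>z. W (psisp \<eta> p M) z + W (psip \<eta> p (M/2)) z)"
    unfolding Ie[OF R(1,2)] Je[OF R(3,4)] using i1 i2 by (simp add: Bochner_Integration.integral_add)
  also have "\<dots> \<le> I (2*M)" unfolding Ie[OF R(5,6)]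
  proof (rule integral_mono)
    show "integrable lborel (\<lambda>z. W (psisp \<eta> p M) z + W (psip \<eta> p (M/2)) z)" using i1 i2 by auto
    show "integrable lborel (W (psip \<eta> p (2 * M)))" using i1 .
    fix z
    have "W (psisp \<eta> p M) z + W (psip \<eta> p (M/2)) z = W (\<lambda>z. psisp \<eta> p M z + psip \<eta> p (M/2) z) z"
      unfolding W_def by (simp add: algebra_simps)
    also have "\<dots> \<le> W (psip \<eta> p (2 * M)) z"
      by (rule Wmono) (rule pw_ineqs(1)[OF c p M(1) rho_nn])
    finally show "W (psisp \<eta> p M) z + W (psip \<eta> p (M/2)) z \<le> W (psip \<eta> p (2 * M)) z" .
  qed
  finally show "J M + I (M/2) \<le> I (2*M)" .
  show "I (M/2) \<le> I M" unfolding Ie[OF R(1,2)] Ie[OF R(3,4)]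
    by (rule integral_mono[OF i1 i1]) (rule Wmono, rule pw_ineqs(2)[OF c p M(1) rho_nn])
  show "J M \<le> I M" unfolding Je[OF R(3,4)] Ie[OF R(3,4)]
    by (rule integral_mono[OF i2 i1]) (rule Wmono, rule pw_ineqs(3)[OF c p M(1) rho_nn])
qed



lemma single:
  fixes w :: "real^2 \<Rightarrow> real \<Rightarrow> real" and I J :: "real \<Rightarrow> real"
  assumes c: "cutoff \<eta>" and p: "p > 1" and C0: "C0 > 0" and d: "\<delta> > 0"
    and wi: "\<forall>T'. 0 \<le> T' \<and> T' < T \<longrightarrow> set_integrable lborel (Omega \<times> {0..T'}) (\<lambda>(x, t). w x t)"
    and wn: "\<forall>x\<in>Omega. \<forall>t. 0 \<le> t \<and> t < T \<longrightarrow> 0 \<le> w x t"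
    and Id: "\<And>R. I R = (\<integral>z\<in>PR R. w (fst z) (snd z) * psiR \<eta> p R (fst z) (snd z) \<partial>lborel)"
    and Jd: "\<And>R. J R = (\<integral>z\<in>PR R. w (fst z) (snd z) * psiR_star \<eta> p R (fst z) (snd z) \<partial>lborel)"
    and hyp: "\<forall>R. R1 \<le> R \<and> R < T \<and> 1 < R \<longrightarrow>
          \<delta> + I R \<le> C0 * R powr (- \<theta> / conj_exp p) * (ln R) powr (\<kappa> / conj_exp p) * J R powr (1 / p)"
    and M: "M > 1" "R1 \<le> M" "2 * M < T"
  shows "\<delta> + I (2 * M) \<ge> (\<delta> + I (M/2)) + (\<delta> + I (M/2)) powr p
             / (C0 * M powr (- \<theta> / conj_exp p) * (ln M) powr (\<kappa> / conj_exp p)) powr p"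
    and "(\<delta> + I (M/2)) powr (p - 1) \<le> (C0 * M powr (- \<theta> / conj_exp p) * (ln M) powr (\<kappa> / conj_exp p)) powr p"
proof -
  have M0: "M > 0" using M by simp
  note F = int_facts[OF c p wi wn Id Jd M0 M(3)]
  have A: "C0 * M powr (- \<theta> / conj_exp p) * (ln M) powr (\<kappa> / conj_exp p) > 0"
    using C0 M by simp
  have h: "\<delta> + I M \<le> C0 * M powr (- \<theta> / conj_exp p) * (ln M) powr (\<kappa> / conj_exp p) * J M powr (1 / p)"
    using hyp M by simp
  show "\<delta> + I (2 * M) \<ge> (\<delta> + I (M/2)) + (\<delta> + I (M/2)) powr p
             / (C0 * M powr (- \<theta> / conj_exp p) * (ln M) powr (\<kappa> / conj_exp p)) powr p"
    using step_real(1)[OF p d A F(1,2,3) h F(4,5,6)] .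
  show "(\<delta> + I (M/2)) powr (p - 1) \<le> (C0 * M powr (- \<theta> / conj_exp p) * (ln M) powr (\<kappa> / conj_exp p)) powr p"
    using step_real(2)[OF p d A F(1,2,3) h F(4,5,6)] .
qed

lemma discrete:
  fixes w :: "real^2 \<Rightarrow> real \<Rightarrow> real" and I J :: "real \<Rightarrow> real"
  assumes c: "cutoff \<eta>" and p: "p > 1" and C0: "C0 > 0" and d: "\<delta> > 0"
    and wi: "\<forall>T'. 0 \<le> T' \<and> T' < T \<longrightarrow> set_integrable lborel (Omega \<times> {0..T'}) (\<lambda>(x, t). w x t)"
    and wn: "\<forall>x\<in>Omega. \<forall>t. 0 \<le> t \<and> t < T \<longrightarrow> 0 \<le> w x t"
    and Id: "\<And>R. I R = (\<integral>z\<in>PR R. w (fst z) (snd z) * psiR \<eta> p R (fst z) (snd z) \<partial>lborel)"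
    and Jd: "\<And>R. J R = (\<integral>z\<in>PR R. w (fst z) (snd z) * psiR_star \<eta> p R (fst z) (snd z) \<partial>lborel)"
    and hyp: "\<forall>R. R1 \<le> R \<and> R < T \<and> 1 < R \<longrightarrow>
          \<delta> + I R \<le> C0 * R powr (- \<theta> / conj_exp p) * (ln R) powr (\<kappa> / conj_exp p) * J R powr (1 / p)"
    and R0: "R0 \<ge> 1" "R0 \<ge> R1" and K: "4 ^ K * R0 < T"
  shows "(\<Sum>k<K. cst p / (C0 * (2 * (4 ^ k * R0)) powr (- \<theta> / conj_exp p)
            * (ln (2 * (4 ^ k * R0))) powr (\<kappa> / conj_exp p)) powr p) \<le> \<delta> powr (1 - p)"
proof (cases "K = 0")
  case True then show ?thesis by simp
next
  case False
  define u where "u k = \<delta> + I (4 ^ k * R0)" for k :: nat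
  define B where "B k = (C0 * (2 * (4 ^ k * R0)) powr (- \<theta> / conj_exp p)
            * (ln (2 * (4 ^ k * R0))) powr (\<kappa> / conj_exp p)) powr p" for k :: nat
  have "(\<Sum>k<K. cst p / B k) \<le> \<delta> powr (1 - p)"
  proof (rule tele[OF p d])
    show "\<delta> \<le> u 0"
    proof -
      have "(4::real) ^ 1 \<le> 4 ^ K" using False by (intro power_increasing) auto
      then have "4 * R0 \<le> 4 ^ K * R0" using R0 by (intro mult_right_mono) auto
      then have "4 * R0 < T" using K by linarith
      then show ?thesis unfolding u_def using int_facts(1)[OF c p wi wn Id Jd, of "2 * R0"] R0 by simp
    qed
    fix k assume k: "k < K"
    define M where "M = 2 * (4 ^ k * R0)"
    have pk: "(4::real) ^ k \<ge> 1" by simp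
    have "(4::real) ^ Suc k \<le> 4 ^ K" using k by (intro power_increasing) auto
    then have "4 ^ Suc k * R0 \<le> 4 ^ K * R0" using R0 by (intro mult_right_mono) auto
    then have "4 ^ Suc k * R0 < T" using K by linarith
    moreover have "R0 \<le> 4 ^ k * R0" using mult_right_mono[OF pk, of R0] R0 by simp
    moreover have "(4::real) ^ Suc k * R0 = 4 * (4 ^ k * R0)" by simp
    ultimately have M: "M > 1" "R1 \<le> M" "2 * M < T" unfolding M_def using R0 by linarith+
    have e1: "M / 2 = 4 ^ k * R0" "2 * M = 4 ^ Suc k * R0" unfolding M_def by auto
    note S = single[OF c p C0 d wi wn Id Jd hyp M]
    have Bp: "B k > 0" unfolding B_def M_def[symmetric] using C0 M by simp
    show "B k > 0 \<and> u k + u k powr p / B k \<le> u (Suc k) \<and> u k powr (p - 1) \<le> B k"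
      using S Bp unfolding u_def B_def M_def[symmetric] e1 by simp
  qed
  then show ?thesis unfolding B_def .
qed



lemma powr_between:
  fixes L x U e :: real
  assumes "0 < L" "L \<le> x" "x \<le> U"
  shows "x powr e \<ge> min (L powr e) (U powr e)"
proof (cases "e \<ge> 0")
  case True
  then have "L powr e \<le> x powr e" using assms by (intro powr_mono2) auto
  then show ?thesis by simp
next
  case False
  then have "U powr e \<le> x powr e" using assms by (intro powr_mono2') auto
  then show ?thesis by simp
qed

lemma sum_lower_beta:
  fixes a b \<beta> :: real
  assumes a: "a > 0" and b: "b > 0"
  shows "\<exists>c>0. \<forall>K::nat. (\<Sum>k<K. (a + real k * b) powr (- \<beta>)) \<ge> c * real K powr (1 - \<beta>)"
proof -
  define m where "m = min a b"
  define c' where "c' = min ((m / 2) powr (- \<beta>)) ((a + b) powr (- \<beta>))"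
  have m: "m > 0" using a b unfolding m_def by simp
  have c': "c' > 0" unfolding c'_def using m a b by simp
  have main: "(\<Sum>k<K. (a + real k * b) powr (- \<beta>)) \<ge> (c' / 2) * real K powr (1 - \<beta>)" if K: "K \<ge> 1" for K :: nat
  proof -
    have Kp: "real K > 0" using K by simp
    have tm: "(a + real k * b) powr (- \<beta>) \<ge> c' * real K powr (- \<beta>)" if k: "K div 2 \<le> k" "k < K" for k
    proof -
      have "real (K div 2) + 1 \<ge> real K / 2" by linarith
      then have lo0: "real k + 1 \<ge> real K / 2" using k by linarith
      have "a + real k * b \<ge> m * (real k + 1)" unfolding m_def using a b
        by (smt (verit, ccfv_SIG) distrib_left min.cobounded1 min.cobounded2 mult.commute mult_right_mono of_nat_0_le_iff mult_cancel_left1)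
      moreover have "m * (real k + 1) \<ge> m * (real K / 2)" using lo0 m by (intro mult_left_mono) auto
      ultimately have lo: "m / 2 * real K \<le> a + real k * b" by simp
      have "real k \<le> real K" using k by simp
      then have "a + real k * b \<le> a * real K + b * real K" using a b K
        by (smt (verit) mult_left_mono mult_cancel_left1 mult.commute of_nat_1 of_nat_le_iff)
      then have hi: "a + real k * b \<le> (a + b) * real K" by (simp add: algebra_simps)
      have "(a + real k * b) powr (- \<beta>) \<ge> min ((m / 2 * real K) powr (- \<beta>)) (((a + b) * real K) powr (- \<beta>))"
        using powr_between[OF _ lo hi] m Kp by simp
      also have "min ((m / 2 * real K) powr (- \<beta>)) (((a + b) * real K) powr (- \<beta>)) = c' * real K powr (- \<beta>)"
        unfolding c'_def powr_mult using Kp by (simp add: min_mult_distrib_right)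
      finally show ?thesis .
    qed
    have "(\<Sum>k<K. (a + real k * b) powr (- \<beta>)) \<ge> (\<Sum>k\<in>{K div 2..<K}. (a + real k * b) powr (- \<beta>))"
      by (intro sum_mono2) auto
    moreover have "(\<Sum>k\<in>{K div 2..<K}. (a + real k * b) powr (- \<beta>)) \<ge> (\<Sum>k\<in>{K div 2..<K}. c' * real K powr (- \<beta>))"
      using tm by (intro sum_mono) auto
    moreover have "(\<Sum>k\<in>{K div 2..<K}. c' * real K powr (- \<beta>)) = real (K - K div 2) * (c' * real K powr (- \<beta>))"
      by simp
    moreover have "real (K - K div 2) \<ge> real K / 2" by linarith
    moreover have "real K / 2 * (c' * real K powr (- \<beta>)) = (c' / 2) * real K powr (1 - \<beta>)"
      using Kp by (simp add: powr_diff powr_minus field_simps)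
    moreover have "c' * real K powr (- \<beta>) \<ge> 0" using c' by simp
    ultimately show ?thesis by (smt (verit) mult_right_mono)
  qed
  show ?thesis
  proof (intro exI[of _ "c' / 2"] conjI allI)
    show "c' / 2 > 0" using c' by simp
    fix K :: nat
    show "(\<Sum>k<K. (a + real k * b) powr (- \<beta>)) \<ge> (c' / 2) * real K powr (1 - \<beta>)"
    proof (cases "K = 0")
      case True then show ?thesis by simp
    next
      case False then show ?thesis using main by simp
    qed
  qed
qed



lemma pow4_exp: "(4::real) ^ n * R0 = exp (real n * ln 4 + ln R0)" if "R0 > 0"
  using that by (simp add: exp_add exp_of_nat_mult)

lemma final_beta_lt1:
  fixes p \<beta> Q a b R0 :: real
  assumes p: "p > 1" and \<beta>: "\<beta> < 1" and Q: "Q > 0" and a: "a > 0" and b: "b > 0" and R0: "R0 \<ge> 1"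
  shows "\<exists>C>0. \<forall>\<delta> (K::nat) T. 0 < \<delta> \<and> \<delta> < 1 \<and> T \<le> 4 ^ (K + 1) * R0
      \<and> (\<Sum>k<K. Q * (a + real k * b) powr (- \<beta>)) \<le> \<delta> powr (1 - p)
      \<longrightarrow> T \<le> exp (C * \<delta> powr (- (p - 1) / (1 - \<beta>)))"
proof -
  obtain c where c: "c > 0" "\<And>K::nat. (\<Sum>k<K. (a + real k * b) powr (- \<beta>)) \<ge> c * real K powr (1 - \<beta>)"
    using sum_lower_beta[OF a b, of \<beta>] by blast
  define G where "G = (1 / (Q * c)) powr (1 / (1 - \<beta>))"
  define C where "C = G * ln 4 + ln 4 + ln R0"
  have G: "G \<ge> 0" unfolding G_def by simp
  have Cp: "C > 0" unfolding C_def using G R0 by (smt (verit) ln_ge_zero ln_gt_zero mult_nonneg_nonneg)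
  show ?thesis
  proof (intro exI[of _ C] conjI allI impI)
    show "C > 0" by (rule Cp)
    fix \<delta> :: real and K :: nat and T :: real
    assume h: "0 < \<delta> \<and> \<delta> < 1 \<and> T \<le> 4 ^ (K + 1) * R0
      \<and> (\<Sum>k<K. Q * (a + real k * b) powr (- \<beta>)) \<le> \<delta> powr (1 - p)"
    define e where "e = (p - 1) / (1 - \<beta>)"
    have e: "e > 0" unfolding e_def using p \<beta> by simp
    define Y where "Y = \<delta> powr (- e)"
    have "\<delta> powr e \<le> 1 powr e" using h e by (intro powr_mono2) auto
    then have Y1: "Y \<ge> 1" unfolding Y_def using h e
      by (simp add: powr_minus_divide)
    have "Q * (c * real K powr (1 - \<beta>)) \<le> Q * (\<Sum>k<K. (a + real k * b) powr (- \<beta>))"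
      using c(2)[of K] Q by (intro mult_left_mono) auto
    also have "\<dots> \<le> \<delta> powr (1 - p)" using h by (simp add: sum_distrib_left)
    finally have "real K powr (1 - \<beta>) \<le> \<delta> powr (1 - p) / (Q * c)" using Q c
      by (simp add: field_simps)
    then have "(real K powr (1 - \<beta>)) powr (1 / (1 - \<beta>)) \<le> (\<delta> powr (1 - p) / (Q * c)) powr (1 / (1 - \<beta>))"
      using \<beta> by (intro powr_mono2) auto
    also have "(real K powr (1 - \<beta>)) powr (1 / (1 - \<beta>)) = real K"
      using \<beta> by (cases "K = 0") (auto simp: powr_powr)
    also have "(\<delta> powr (1 - p) / (Q * c)) powr (1 / (1 - \<beta>)) = G * Y"
    proof -
      have "(1 - p) * (1 / (1 - \<beta>)) = - e" unfolding e_def using \<beta> by (simp add: field_simps)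
      then show ?thesis unfolding G_def Y_def using h
        by (simp add: powr_divide powr_powr divide_inverse powr_mult mult.commute)
    qed
    finally have KY: "real K \<le> G * Y" .
    have "T \<le> 4 ^ (K + 1) * R0" using h by simp
    also have "\<dots> = exp ((real K + 1) * ln 4 + ln R0)" using pow4_exp[of R0 "K + 1"] R0 by simp
    also have "(real K + 1) * ln 4 + ln R0 \<le> (G * Y + Y) * ln 4 + ln R0 * Y"
    proof -
      have l4: "ln (4::real) > 0" by simp
      have "(real K + 1) * ln 4 \<le> (G * Y + Y) * ln 4" using KY Y1 l4 by (intro mult_right_mono) auto
      moreover have "ln R0 \<le> ln R0 * Y" using Y1 R0 by (simp add: mult_le_cancel_left1)
      ultimately show ?thesis by linarith
    qed
    also have "\<dots> = C * Y" unfolding C_def by (simp add: algebra_simps)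
    finally have fin: "T \<le> exp (C * \<delta> powr (- e))" unfolding Y_def by simp
    have eq: "- (p - 1) / (1 - \<beta>) = - e" unfolding e_def using \<beta> by (simp add: field_simps)
    show "T \<le> exp (C * \<delta> powr (- (p - 1) / (1 - \<beta>)))" unfolding eq using fin .
  qed
qed

lemma harm_sum: "(\<Sum>k<K. 1 / (real k + 1)) = (harm K :: real)"
  unfolding harm_altdef by (simp add: add.commute divide_inverse)

lemma final_beta1:
  fixes p Q a b R0 :: real
  assumes p: "p > 1" and Q: "Q > 0" and a: "a > 0" and b: "b > 0" and R0: "R0 \<ge> 1"
  shows "\<exists>C>0. \<forall>\<delta> (K::nat) T. 0 < \<delta> \<and> \<delta> < 1 \<and> T \<le> 4 ^ (K + 1) * R0
      \<and> (\<Sum>k<K. Q * (a + real k * b) powr (- 1)) \<le> \<delta> powr (1 - p)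
      \<longrightarrow> T \<le> exp (exp (C * \<delta> powr (- (p - 1))))"
proof -
  define L where "L = ln 4 + ln R0"
  have L: "L > 0" unfolding L_def using R0 by (smt (verit) ln_ge_zero ln_gt_zero)
  define c9 where "c9 = Q / (a + b)"
  have c9: "c9 > 0" unfolding c9_def using Q a b by simp
  define C where "C = 1 / c9 + L"
  show ?thesis
  proof (intro exI[of _ C] conjI allI impI)
    have "1 / c9 > 0" using c9 by simp
    then show "C > 0" unfolding C_def using L by linarith
    fix \<delta> :: real and K :: nat and T :: real
    assume h: "0 < \<delta> \<and> \<delta> < 1 \<and> T \<le> 4 ^ (K + 1) * R0
      \<and> (\<Sum>k<K. Q * (a + real k * b) powr (- 1)) \<le> \<delta> powr (1 - p)"
    define Y where "Y = \<delta> powr (1 - p)"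
    have Y1: "Y \<ge> 1" unfolding Y_def using h p
      by (smt (verit) powr_mono' powr_zero_eq_one)
    have tm: "Q * (a + real k * b) powr (- 1) \<ge> c9 * (1 / (real k + 1))" for k :: nat
    proof -
      have pos: "a + real k * b > 0" using a b by (simp add: add_pos_nonneg)
      have "a + real k * b \<le> (a + b) * (real k + 1)" using a b
        by (simp add: algebra_simps mult_left_mono) 
      then have "1 / ((a + b) * (real k + 1)) \<le> 1 / (a + real k * b)" using pos
        by (intro divide_left_mono) auto
      then have "Q * (1 / ((a + b) * (real k + 1))) \<le> Q * (1 / (a + real k * b))" using Q
        by (intro mult_left_mono) auto
      then show ?thesis unfolding c9_def using pos by (simp add: powr_minus_divide)
    qed
    have "c9 * ln (real K + 1) \<le> c9 * harm K" using c9 ln_le_harm[of K] by (intro mult_left_mono) auto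
    also have "\<dots> = (\<Sum>k<K. c9 * (1 / (real k + 1)))" by (simp only: harm_sum[symmetric] sum_distrib_left)
    also have "\<dots> \<le> (\<Sum>k<K. Q * (a + real k * b) powr (- 1))" using tm by (intro sum_mono) auto
    also have "\<dots> \<le> Y" using h unfolding Y_def by simp
    finally have "ln (real K + 1) \<le> Y / c9" using c9 by (simp add: field_simps)
    then have K1: "real K + 1 \<le> exp (Y / c9)"
      by (smt (verit) exp_ln of_nat_0_le_iff exp_le_cancel_iff)
    have "T \<le> 4 ^ (K + 1) * R0" using h by simp
    also have "\<dots> = exp ((real K + 1) * ln 4 + ln R0)" using pow4_exp[of R0 "K + 1"] R0 by simp
    also have "(real K + 1) * ln 4 + ln R0 \<le> L * (real K + 1)"
      unfolding L_def using R0 by (simp add: algebra_simps mult_le_cancel_left1)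
    also have "\<dots> \<le> L * exp (Y / c9)" using K1 L by (intro mult_left_mono) auto
    also have "\<dots> \<le> exp L * exp (Y / c9)" using L exp_ge_add_one_self[of L] by (intro mult_right_mono) (linarith, simp)
    also have "\<dots> \<le> exp (L * Y) * exp (Y / c9)" using L Y1 by (intro mult_right_mono) auto
    also have "\<dots> = exp (C * Y)" unfolding C_def by (simp add: exp_add[symmetric] algebra_simps)
    finally show "T \<le> exp (exp (C * \<delta> powr (- (p - 1))))" unfolding Y_def by simp
  qed
qed



lemma ln_eps: fixes x \<epsilon> :: real shows "x > 0 \<Longrightarrow> \<epsilon> > 0 \<Longrightarrow> ln x \<le> \<epsilon> * x - 1 - ln \<epsilon>"
  using ln_le_minus_one[of "\<epsilon> * x"] by (simp add: ln_mult)

lemma lower_l: "\<exists>c3. \<forall>l::real. l \<ge> 1 \<longrightarrow> l + \<kappa> * ln l \<ge> c3"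
proof (cases "\<kappa> \<ge> 0")
  case True
  show ?thesis
  proof (intro exI[of _ 1] allI impI)
    fix l :: real assume "l \<ge> 1"
    then show "l + \<kappa> * ln l \<ge> 1" using True by (simp add: add_increasing2)
  qed
next
  case False
  define e where "e = 1 / (2 * (- \<kappa>))"
  have e: "e > 0" using False unfolding e_def by simp
  show ?thesis
  proof (intro exI[of _ "\<kappa> * (-1 - ln e)"] allI impI)
    fix l :: real assume l: "l \<ge> 1"
    have "(- \<kappa>) * ln l \<le> (- \<kappa>) * (e * l - 1 - ln e)" using False ln_eps[of l e] l e
      by (intro mult_left_mono) auto
    also have "\<dots> = l / 2 + (- \<kappa>) * (-1 - ln e)" unfolding e_def using False by (simp add: field_simps)
    finally show "l + \<kappa> * ln l \<ge> \<kappa> * (-1 - ln e)" using l by linarith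
  qed
qed

lemma theta_log:
  fixes \<theta> \<kappa> c0 :: real
  assumes th: "\<theta> > 0"
  shows "\<exists>c1. \<exists>l0\<ge>1. \<forall>m l. l \<ge> l0 \<longrightarrow> m > 0 \<longrightarrow> \<theta> * m \<le> c0 + l + \<kappa> * ln m
           \<longrightarrow> \<theta> * m \<le> c1 + l + \<kappa> * ln l"
proof -
  consider "\<kappa> = 0" | "\<kappa> > 0" | "\<kappa> < 0" by linarith
  then show ?thesis
  proof cases
    case 1
    have "\<forall>m l. 1 \<le> l \<longrightarrow> 0 < m \<longrightarrow> \<theta> * m \<le> c0 + l + \<kappa> * ln m \<longrightarrow> \<theta> * m \<le> c0 + l + \<kappa> * ln l"
      using 1 by simp
    then show ?thesis by blast
  next
    case 2
    define e where "e = \<theta> / (2 * \<kappa>)"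
    have e: "e > 0" using 2 th unfolding e_def by simp
    define c2 where "c2 = \<kappa> * (-1 - ln e)"
    show ?thesis
    proof (rule exI[of _ "c0 + \<kappa> * ln (4 / \<theta>)"], rule exI[of _ "max 1 \<bar>c0 + c2\<bar>"], intro conjI allI impI)
      show "1 \<le> max 1 \<bar>c0 + c2\<bar>" by simp
      fix m l :: real
      assume l: "max 1 \<bar>c0 + c2\<bar> \<le> l" and m: "m > 0" and h: "\<theta> * m \<le> c0 + l + \<kappa> * ln m"
      have "\<kappa> * ln m \<le> \<kappa> * (e * m - 1 - ln e)" using ln_eps[OF m e] 2 by (intro mult_left_mono) auto
      also have "\<dots> = \<theta> * m / 2 + c2" unfolding c2_def e_def using 2 by (simp add: field_simps)
      finally have "\<theta> * m / 2 \<le> 2 * l" using h l by linarith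
      then have mle: "m \<le> (4 / \<theta>) * l" using th by (simp add: field_simps)
      have lp: "l > 0" using l by linarith
      have "ln m \<le> ln ((4 / \<theta>) * l)" using mle m by simp
      also have "\<dots> = ln (4 / \<theta>) + ln l" using lp th by (subst ln_mult) auto
      finally have "\<kappa> * ln m \<le> \<kappa> * ln (4 / \<theta>) + \<kappa> * ln l" using 2
        by (metis distrib_left mult_left_mono less_imp_le)
      then show "\<theta> * m \<le> c0 + \<kappa> * ln (4 / \<theta>) + l + \<kappa> * ln l" using h by linarith
    qed
  next
    case 3
    define e where "e = 1 / (2 * (- \<kappa>))"
    have e: "e > 0" using 3 unfolding e_def by simp
    define c1 where "c1 = max (c0 - \<kappa> * ln (2 * \<theta>)) ((- \<kappa>) * (-1 - ln e))"
    show ?thesis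
    proof (rule exI[of _ c1], rule exI[of _ 1], intro conjI allI impI)
      fix m l :: real
      assume l: "1 \<le> l" and m: "m > 0" and h: "\<theta> * m \<le> c0 + l + \<kappa> * ln m"
      show "\<theta> * m \<le> c1 + l + \<kappa> * ln l"
      proof (cases "m \<ge> l / (2 * \<theta>)")
        case True
        have "l / (2 * \<theta>) > 0" using l th by simp
        then have "ln (l / (2 * \<theta>)) \<le> ln m" using True by (subst ln_le_cancel_iff) auto
        moreover have "ln (l / (2 * \<theta>)) = ln l - ln (2 * \<theta>)" using l th by (simp add: ln_div)
        ultimately have "\<kappa> * ln m \<le> \<kappa> * (ln l - ln (2 * \<theta>))" using 3
          by (simp add: mult_left_mono_neg)
        then show ?thesis using h unfolding c1_def by (simp add: algebra_simps)
      next
        case False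
        then have tm: "\<theta> * m \<le> l / 2" using th by (simp add: field_simps)
        have "(- \<kappa>) * ln l \<le> (- \<kappa>) * (e * l - 1 - ln e)" using 3 ln_eps[of l e] l e
          by (intro mult_left_mono) auto
        also have "\<dots> = l / 2 + (- \<kappa>) * (-1 - ln e)" unfolding e_def using 3 by (simp add: field_simps)
        finally show ?thesis using tm unfolding c1_def by linarith
      qed
    qed (simp)
  qed
qed

lemma theta_final:
  fixes \<theta> \<kappa> c0 R0 :: real
  assumes th: "\<theta> > 0" and R0: "R0 > 0"
  shows "\<exists>C>0. \<exists>\<delta>0>0. \<forall>\<delta> T. 0 < \<delta> \<and> \<delta> < \<delta>0 \<and>
     (T \<le> 4 * R0 \<or> (T > 4 \<and> \<theta> * ln (T / 4) \<le> c0 + ln (1 / \<delta>) + \<kappa> * ln (ln (T / 4))))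
     \<longrightarrow> T \<le> C * \<delta> powr (- 1 / \<theta>) * ln (1 / \<delta>) powr (\<kappa> / \<theta>)"
proof -
  obtain c1 l0 where l0: "l0 \<ge> 1" and c1: "\<And>m l. l \<ge> l0 \<Longrightarrow> m > 0 \<Longrightarrow> \<theta> * m \<le> c0 + l + \<kappa> * ln m
           \<Longrightarrow> \<theta> * m \<le> c1 + l + \<kappa> * ln l"
    using theta_log[OF th, of c0 \<kappa>] by blast
  obtain c3 where c3: "\<And>l::real. l \<ge> 1 \<Longrightarrow> l + \<kappa> * ln l \<ge> c3" using lower_l[of \<kappa>] by blast
  define C where "C = 4 * max (exp (c1 / \<theta>)) (R0 * exp (- c3 / \<theta>))"
  have Cp: "C > 0" unfolding C_def using R0 by (simp add: max_def)
  have d0: "exp (- l0) > 0" by simp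
  have "\<forall>\<delta> T. 0 < \<delta> \<and> \<delta> < exp (- l0) \<and>
     (T \<le> 4 * R0 \<or> (T > 4 \<and> \<theta> * ln (T / 4) \<le> c0 + ln (1 / \<delta>) + \<kappa> * ln (ln (T / 4))))
     \<longrightarrow> T \<le> C * \<delta> powr (- 1 / \<theta>) * ln (1 / \<delta>) powr (\<kappa> / \<theta>)"
  proof (intro allI impI)
    fix \<delta> T :: real
    assume h: "0 < \<delta> \<and> \<delta> < exp (- l0) \<and>
     (T \<le> 4 * R0 \<or> (T > 4 \<and> \<theta> * ln (T / 4) \<le> c0 + ln (1 / \<delta>) + \<kappa> * ln (ln (T / 4))))"
    define l where "l = ln (1 / \<delta>)"
    have ll: "l > l0" unfolding l_def using h
      by (smt (verit, best) exp_less_cancel_iff exp_ln ln_div ln_one)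
    then have l1: "l \<ge> 1" using l0 by simp
    define X where "X = exp ((l + \<kappa> * ln l) / \<theta>)"
    have RHS: "\<delta> powr (- 1 / \<theta>) * ln (1 / \<delta>) powr (\<kappa> / \<theta>) = X"
    proof -
      have "\<delta> powr (- 1 / \<theta>) = exp (l / \<theta>)" unfolding l_def using h
        by (simp add: powr_def ln_div)
      moreover have "ln (1 / \<delta>) powr (\<kappa> / \<theta>) = exp (\<kappa> * ln l / \<theta>)" using l1 unfolding l_def[symmetric]
        by (simp add: powr_def)
      ultimately show ?thesis unfolding X_def by (simp add: exp_add[symmetric] add_divide_distrib)
    qed
    have Xp: "X > 0" unfolding X_def by simp
    show "T \<le> C * \<delta> powr (- 1 / \<theta>) * ln (1 / \<delta>) powr (\<kappa> / \<theta>)"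
      unfolding mult.assoc RHS
    proof -
      from h consider "T \<le> 4 * R0" | "T > 4" "\<theta> * ln (T / 4) \<le> c0 + l + \<kappa> * ln (ln (T / 4))"
        unfolding l_def by blast
      then show "T \<le> C * X"
      proof cases
        case 1
        have "c3 / \<theta> \<le> (l + \<kappa> * ln l) / \<theta>" using c3[OF l1] th by (simp add: divide_right_mono)
        then have "exp (c3 / \<theta>) \<le> X" unfolding X_def by simp
        then have "R0 * exp (- c3 / \<theta>) * exp (c3 / \<theta>) \<le> R0 * exp (- c3 / \<theta>) * X"
          using R0 by (intro mult_left_mono) auto
        moreover have "R0 * exp (- c3 / \<theta>) * exp (c3 / \<theta>) = R0"
          by (simp add: mult.assoc exp_add[symmetric])
        ultimately have "R0 \<le> R0 * exp (- c3 / \<theta>) * X" by linarith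
        moreover have "R0 * exp (- c3 / \<theta>) * X \<le> max (exp (c1 / \<theta>)) (R0 * exp (- c3 / \<theta>)) * X"
          using Xp by (intro mult_right_mono) auto
        ultimately show ?thesis using 1 unfolding C_def by simp
      next
        case 2
        define m where "m = ln (T / 4)"
        have m: "m > 0" unfolding m_def using 2 by simp
        have "\<theta> * m \<le> c1 + l + \<kappa> * ln l" using c1[OF _ m] ll 2 unfolding m_def by simp
        then have "m \<le> c1 / \<theta> + (l + \<kappa> * ln l) / \<theta>" using th by (simp add: field_simps)
        then have "exp m \<le> exp (c1 / \<theta>) * X" unfolding X_def by (simp add: exp_add[symmetric])
        moreover have "exp m = T / 4" unfolding m_def using 2 by simp
        moreover have "exp (c1 / \<theta>) * X \<le> max (exp (c1 / \<theta>)) (R0 * exp (- c3 / \<theta>)) * X"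
          using Xp by (intro mult_right_mono) auto
        ultimately show ?thesis unfolding C_def by simp
      qed
    qed
  qed
  then show ?thesis using Cp d0 by blast
qed



lemma exK:
  fixes R0 T :: real
  assumes R0: "R0 > 0"
  shows "\<exists>K. T \<le> 4 ^ (K + 1) * R0 \<and> (K = 0 \<or> 4 ^ K * R0 < T)"
proof (cases "T \<le> R0")
  case True
  then have "T \<le> 4 ^ (0 + 1) * R0" using R0 by simp
  then show ?thesis by blast
next
  case False
  obtain n where n: "T / R0 < 4 ^ n" using real_arch_pow[of 4 "T / R0"] by auto
  then have ex: "\<exists>n. T \<le> 4 ^ n * R0" using R0 by (auto simp: field_simps intro!: exI[of _ n])
  define N where "N = (LEAST n. T \<le> 4 ^ n * R0)"
  have N: "T \<le> 4 ^ N * R0" unfolding N_def using LeastI_ex[OF ex] .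
  have N0: "N \<noteq> 0" using N False by (cases N) auto
  have "\<not> T \<le> 4 ^ (N - 1) * R0" unfolding N_def
    using not_less_Least[of "N - 1" "\<lambda>n. T \<le> 4 ^ n * R0"] N0 unfolding N_def[symmetric] by simp
  then have "4 ^ (N - 1) * R0 < T" by simp
  moreover have "T \<le> 4 ^ (N - 1 + 1) * R0" using N N0 by simp
  ultimately show ?thesis by blast
qed

lemma term_rewrite:
  fixes p C0 \<kappa> R0 :: real and k :: nat
  assumes p: "p > 1" and C0: "C0 > 0" and R0: "R0 \<ge> 1"
  shows "cst p / (C0 * (2 * (4 ^ k * R0)) powr (- 0 / conj_exp p)
            * (ln (2 * (4 ^ k * R0))) powr (\<kappa> / conj_exp p)) powr p
       = (cst p / C0 powr p) * (ln (2 * R0) + real k * ln 4) powr (- (\<kappa> * (p - 1)))"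
proof -
  have X: "2 * (4 ^ k * R0) > (0::real)" using R0 by simp
  have lnX: "ln (2 * (4 ^ k * R0)) = ln (2 * R0) + real k * ln 4"
    using R0 by (simp add: ln_mult ln_realpow)
  have lp: "ln (2 * R0) + real k * ln 4 > 0" using R0
    by (smt (verit) ln_gt_zero mult_nonneg_nonneg of_nat_0_le_iff ln_ge_zero)
  have e: "\<kappa> / conj_exp p * p = \<kappa> * (p - 1)" unfolding conj_exp_def using p by (simp add: field_simps)
  have "(C0 * (2 * (4 ^ k * R0)) powr (- 0 / conj_exp p)
            * (ln (2 * (4 ^ k * R0))) powr (\<kappa> / conj_exp p)) powr p
       = C0 powr p * (ln (2 * R0) + real k * ln 4) powr (\<kappa> * (p - 1))"
  proof -
    have e2: "\<kappa> * p / conj_exp p = \<kappa> * (p - 1)" using e by simp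
    have "R0 \<noteq> 0" using R0 by simp
    then show ?thesis using X unfolding lnX by (simp add: powr_mult powr_powr e e2)
  qed
  then show ?thesis using lp C0 by (simp add: powr_minus_divide)
qed

theorem lemma2p3:
  fixes p C0 R1 \<theta> \<kappa> :: real and \<eta> :: "real \<Rightarrow> real"
  assumes "p > 1" and "cutoff \<eta>" and "C0 > 0" and "R1 > 0" and "\<theta> \<ge> 0"
  shows "\<exists>C>0. \<exists>\<delta>0>0. \<forall>\<delta> T (w :: (real^2) \<Rightarrow> real \<Rightarrow> real).
    0 < \<delta> \<and> \<delta> < \<delta>0 \<and> T > R1
    \<and> (\<forall>x\<in>Omega. \<forall>t. 0 \<le> t \<and> t < T \<longrightarrow> 0 \<le> w x t)
    \<and> (\<forall>T'. 0 \<le> T' \<and> T' < T \<longrightarrow>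
           set_integrable lborel (Omega \<times> {0..T'}) (\<lambda>(x, t). w x t))
    \<and> (\<forall>R. R1 \<le> R \<and> R < T \<and> 1 < R \<longrightarrow>
          \<delta> + (\<integral>z\<in>PR R. w (fst z) (snd z) * psiR \<eta> p R (fst z) (snd z) \<partial>lborel)
          \<le> C0 * R powr (- \<theta> / conj_exp p) * (ln R) powr (\<kappa> / conj_exp p)
            * (\<integral>z\<in>PR R. w (fst z) (snd z) * psiR_star \<eta> p R (fst z) (snd z) \<partial>lborel)
                powr (1 / p))
    \<longrightarrow> (\<theta> > 0 \<longrightarrow> T \<le> C * \<delta> powr (- 1 / \<theta>) * (ln (1 / \<delta>)) powr (\<kappa> / \<theta>))
      \<and> (\<theta> = 0 \<and> \<kappa> < 1 / (p - 1) \<longrightarrow>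
           T \<le> exp (C * \<delta> powr (- (p - 1) / (1 - \<kappa> * (p - 1)))))
      \<and> (\<theta> = 0 \<and> \<kappa> = 1 / (p - 1) \<longrightarrow>
           T \<le> exp (exp (C * \<delta> powr (- (p - 1)))))"
proof -
  note p = assms(1) and c = assms(2) and C0 = assms(3) and R1 = assms(4) and th = assms(5)
  define R0 where "R0 = max R1 2"
  have R0: "R0 \<ge> 1" "R0 \<ge> R1" "R0 \<ge> 2" unfolding R0_def by auto
  define Hyp where "Hyp = (\<lambda>\<delta> T (w :: (real^2) \<Rightarrow> real \<Rightarrow> real). 0 < \<delta> \<and> T > R1
    \<and> (\<forall>x\<in>Omega. \<forall>t. 0 \<le> t \<and> t < T \<longrightarrow> 0 \<le> w x t)
    \<and> (\<forall>T'. 0 \<le> T' \<and> T' < T \<longrightarrow>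
           set_integrable lborel (Omega \<times> {0..T'}) (\<lambda>(x, t). w x t))
    \<and> (\<forall>R. R1 \<le> R \<and> R < T \<and> 1 < R \<longrightarrow>
          \<delta> + (\<integral>z\<in>PR R. w (fst z) (snd z) * psiR \<eta> p R (fst z) (snd z) \<partial>lborel)
          \<le> C0 * R powr (- \<theta> / conj_exp p) * (ln R) powr (\<kappa> / conj_exp p)
            * (\<integral>z\<in>PR R. w (fst z) (snd z) * psiR_star \<eta> p R (fst z) (snd z) \<partial>lborel)
                powr (1 / p)))"
  have key: "\<exists>K. T \<le> 4 ^ (K + 1) * R0 \<and>
     (\<Sum>k<K. cst p / (C0 * (2 * (4 ^ k * R0)) powr (- \<theta> / conj_exp p)
            * (ln (2 * (4 ^ k * R0))) powr (\<kappa> / conj_exp p)) powr p) \<le> \<delta> powr (1 - p)"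
    if H: "Hyp \<delta> T w" for \<delta> T w
  proof -
    obtain K where K: "T \<le> 4 ^ (K + 1) * R0" "K = 0 \<or> 4 ^ K * R0 < T"
      using exK[of R0 T] R0 by auto
    have "(\<Sum>k<K. cst p / (C0 * (2 * (4 ^ k * R0)) powr (- \<theta> / conj_exp p)
            * (ln (2 * (4 ^ k * R0))) powr (\<kappa> / conj_exp p)) powr p) \<le> \<delta> powr (1 - p)"
    proof (cases "K = 0")
      case True then show ?thesis by simp
    next
      case False
      then have KT: "4 ^ K * R0 < T" using K by simp
      show ?thesis
        by (rule discrete[where w = w and
              I = "\<lambda>R. (\<integral>z\<in>PR R. w (fst z) (snd z) * psiR \<eta> p R (fst z) (snd z) \<partial>lborel)" and
              J = "\<lambda>R. (\<integral>z\<in>PR R. w (fst z) (snd z) * psiR_star \<eta> p R (fst z) (snd z) \<partial>lborel)",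
              OF c p C0 _ _ _ refl refl _ R0(1) R0(2) KT])
           (use H in \<open>auto simp: Hyp_def\<close>)
    qed
    then show ?thesis using K by blast
  qed
  have keyth: "T \<le> 4 * R0 \<or> (T > 4 \<and> \<theta> * ln (T / 4) \<le> conj_exp p * ln C0 + ln (1 / \<delta>) + \<kappa> * ln (ln (T / 4)))"
    if H: "Hyp \<delta> T w" for \<delta> T w
  proof (cases "T \<le> 4 * R0")
    case True then show ?thesis by simp
  next
    case False
    define M where "M = T / 4"
    have M: "M > 1" "R1 \<le> M" "2 * M < T" "M > 0" unfolding M_def using False R0 by auto
    have d: "\<delta> > 0" using H unfolding Hyp_def by simp
    have wi: "\<forall>T'. 0 \<le> T' \<and> T' < T \<longrightarrow> set_integrable lborel (Omega \<times> {0..T'}) (\<lambda>(x, t). w x t)"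
      and wn: "\<forall>x\<in>Omega. \<forall>t. 0 \<le> t \<and> t < T \<longrightarrow> 0 \<le> w x t" using H unfolding Hyp_def by auto
    define A where "A = C0 * M powr (- \<theta> / conj_exp p) * (ln M) powr (\<kappa> / conj_exp p)"
    have lM: "ln M > 0" using M by simp
    have Ap: "A > 0" unfolding A_def using C0 M lM by simp
    have S: "(\<delta> + (\<integral>z\<in>PR (M/2). w (fst z) (snd z) * psiR \<eta> p (M/2) (fst z) (snd z) \<partial>lborel)) powr (p - 1) \<le> A powr p"
      unfolding A_def
      by (rule single(2)[where w = w and
              I = "\<lambda>R. (\<integral>z\<in>PR R. w (fst z) (snd z) * psiR \<eta> p R (fst z) (snd z) \<partial>lborel)" and
              J = "\<lambda>R. (\<integral>z\<in>PR R. w (fst z) (snd z) * psiR_star \<eta> p R (fst z) (snd z) \<partial>lborel)",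
              OF c p C0 d wi wn refl refl _ M(1,2,3)])
         (use H in \<open>auto simp: Hyp_def\<close>)
    have I0: "0 \<le> (\<integral>z\<in>PR (M/2). w (fst z) (snd z) * psiR \<eta> p (M/2) (fst z) (snd z) \<partial>lborel)"
      by (rule int_facts(1)[where w = w and
              I = "\<lambda>R. (\<integral>z\<in>PR R. w (fst z) (snd z) * psiR \<eta> p R (fst z) (snd z) \<partial>lborel)" and
              J = "\<lambda>R. (\<integral>z\<in>PR R. w (fst z) (snd z) * psiR_star \<eta> p R (fst z) (snd z) \<partial>lborel)",
              OF c p wi wn refl refl M(4) M(3)])
    have "\<delta> powr (p - 1) \<le> A powr p"
    proof -
      have "\<delta> powr (p - 1) \<le> (\<delta> + (\<integral>z\<in>PR (M/2). w (fst z) (snd z) * psiR \<eta> p (M/2) (fst z) (snd z) \<partial>lborel)) powr (p - 1)"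
        using I0 d p by (intro powr_mono2) auto
      then show ?thesis using S by linarith
    qed
    then have "ln (\<delta> powr (p - 1)) \<le> ln (A powr p)" using d Ap by (subst ln_le_cancel_iff) auto
    moreover have "ln (\<delta> powr (p - 1)) = (p - 1) * ln \<delta>" using d by (simp add: ln_powr)
    moreover have "ln (A powr p) = p * ln A" using Ap by (simp add: ln_powr)
    ultimately have l1: "(p - 1) * ln \<delta> \<le> p * ln A" by linarith
    have lA: "ln A = ln C0 + (- \<theta> / conj_exp p) * ln M + (\<kappa> / conj_exp p) * ln (ln M)"
      unfolding A_def using C0 M lM by (simp add: ln_mult ln_powr)
    have cp: "conj_exp p = p / (p - 1)" unfolding conj_exp_def ..
    have "(p - 1) * ln \<delta> \<le> (p - 1) * (conj_exp p * ln C0 - \<theta> * ln M + \<kappa> * ln (ln M))"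
    proof -
      have "p * ln A = (p - 1) * (conj_exp p * ln C0 - \<theta> * ln M + \<kappa> * ln (ln M))"
        unfolding lA cp using p by (simp add: field_simps)
      then show ?thesis using l1 by simp
    qed
    then have "ln \<delta> \<le> conj_exp p * ln C0 - \<theta> * ln M + \<kappa> * ln (ln M)" using p by simp
    moreover have "ln (1 / \<delta>) = - ln \<delta>" using d by (simp add: ln_div)
    ultimately have "\<theta> * ln M \<le> conj_exp p * ln C0 + ln (1 / \<delta>) + \<kappa> * ln (ln M)" by linarith
    moreover have "T > 4" using False R0 by simp
    ultimately show ?thesis unfolding M_def by simp
  qed
  consider "\<theta> > 0" | "\<theta> = 0" "\<kappa> < 1 / (p - 1)" | "\<theta> = 0" "\<kappa> = 1 / (p - 1)" | "\<theta> = 0" "\<kappa> > 1 / (p - 1)"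
    using th by linarith
  then show ?thesis
  proof cases
    case 1
    obtain C \<delta>0 where C: "C > 0" "\<delta>0 > 0" and CC: "\<And>\<delta> T. 0 < \<delta> \<and> \<delta> < \<delta>0 \<and>
     (T \<le> 4 * R0 \<or> (T > 4 \<and> \<theta> * ln (T / 4) \<le> conj_exp p * ln C0 + ln (1 / \<delta>) + \<kappa> * ln (ln (T / 4))))
     \<Longrightarrow> T \<le> C * \<delta> powr (- 1 / \<theta>) * ln (1 / \<delta>) powr (\<kappa> / \<theta>)"
      using theta_final[OF 1, of R0 "conj_exp p * ln C0" \<kappa>] R0 by auto
    show ?thesis
    proof (rule exI[of _ C], rule conjI[OF C(1)], rule exI[of _ \<delta>0], rule conjI[OF C(2)], intro allI impI)
      fix \<delta> T w assume h: "0 < \<delta> \<and> \<delta> < \<delta>0 \<and> T > R1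
    \<and> (\<forall>x\<in>Omega. \<forall>t. 0 \<le> t \<and> t < T \<longrightarrow> 0 \<le> w x t)
    \<and> (\<forall>T'. 0 \<le> T' \<and> T' < T \<longrightarrow>
           set_integrable lborel (Omega \<times> {0..T'}) (\<lambda>(x, t). w x t))
    \<and> (\<forall>R. R1 \<le> R \<and> R < T \<and> 1 < R \<longrightarrow>
          \<delta> + (\<integral>z\<in>PR R. w (fst z) (snd z) * psiR \<eta> p R (fst z) (snd z) \<partial>lborel)
          \<le> C0 * R powr (- \<theta> / conj_exp p) * (ln R) powr (\<kappa> / conj_exp p)
            * (\<integral>z\<in>PR R. w (fst z) (snd z) * psiR_star \<eta> p R (fst z) (snd z) \<partial>lborel)
                powr (1 / p))"
      then have "Hyp \<delta> T w" unfolding Hyp_def by blast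
      then have "T \<le> C * \<delta> powr (- 1 / \<theta>) * ln (1 / \<delta>) powr (\<kappa> / \<theta>)"
        using CC keyth h by blast
      then show "(\<theta> > 0 \<longrightarrow> T \<le> C * \<delta> powr (- 1 / \<theta>) * (ln (1 / \<delta>)) powr (\<kappa> / \<theta>))
      \<and> (\<theta> = 0 \<and> \<kappa> < 1 / (p - 1) \<longrightarrow>
           T \<le> exp (C * \<delta> powr (- (p - 1) / (1 - \<kappa> * (p - 1)))))
      \<and> (\<theta> = 0 \<and> \<kappa> = 1 / (p - 1) \<longrightarrow>
           T \<le> exp (exp (C * \<delta> powr (- (p - 1)))))" using 1 by simp
    qed
  next
    case 2
    have b: "\<kappa> * (p - 1) < 1" using 2 p by (simp add: field_simps)
    have Q: "cst p / C0 powr p > 0" using cst_pos[OF p] C0 by simp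
    have a: "ln (2 * R0) > 0" using R0 by simp
    have ln4: "ln (4::real) > 0" by simp
    obtain C where C: "C > 0" and CC: "\<And>\<delta> K T. 0 < \<delta> \<and> \<delta> < 1 \<and> T \<le> 4 ^ (K + 1) * R0
      \<and> (\<Sum>k<K. (cst p / C0 powr p) * (ln (2 * R0) + real k * ln 4) powr (- (\<kappa> * (p - 1)))) \<le> \<delta> powr (1 - p)
      \<Longrightarrow> T \<le> exp (C * \<delta> powr (- (p - 1) / (1 - \<kappa> * (p - 1))))"
      using final_beta_lt1[OF p b Q a ln4 R0(1)] by auto
    show ?thesis
    proof (rule exI[of _ C], rule conjI[OF C], rule exI[of _ 1], rule conjI[OF zero_less_one], intro allI impI)
      fix \<delta> T w assume h: "0 < \<delta> \<and> \<delta> < 1 \<and> T > R1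
    \<and> (\<forall>x\<in>Omega. \<forall>t. 0 \<le> t \<and> t < T \<longrightarrow> 0 \<le> w x t)
    \<and> (\<forall>T'. 0 \<le> T' \<and> T' < T \<longrightarrow>
           set_integrable lborel (Omega \<times> {0..T'}) (\<lambda>(x, t). w x t))
    \<and> (\<forall>R. R1 \<le> R \<and> R < T \<and> 1 < R \<longrightarrow>
          \<delta> + (\<integral>z\<in>PR R. w (fst z) (snd z) * psiR \<eta> p R (fst z) (snd z) \<partial>lborel)
          \<le> C0 * R powr (- \<theta> / conj_exp p) * (ln R) powr (\<kappa> / conj_exp p)
            * (\<integral>z\<in>PR R. w (fst z) (snd z) * psiR_star \<eta> p R (fst z) (snd z) \<partial>lborel)
                powr (1 / p))"
      then have "Hyp \<delta> T w" unfolding Hyp_def by blast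
      from key[OF this] obtain K where K: "T \<le> 4 ^ (K + 1) * R0"
        "(\<Sum>k<K. cst p / (C0 * (2 * (4 ^ k * R0)) powr (- \<theta> / conj_exp p)
            * (ln (2 * (4 ^ k * R0))) powr (\<kappa> / conj_exp p)) powr p) \<le> \<delta> powr (1 - p)" by blast
      have "(\<Sum>k<K. (cst p / C0 powr p) * (ln (2 * R0) + real k * ln 4) powr (- (\<kappa> * (p - 1)))) \<le> \<delta> powr (1 - p)"
        using K(2) unfolding 2(1) term_rewrite[OF p C0 R0(1)] .
      then have "T \<le> exp (C * \<delta> powr (- (p - 1) / (1 - \<kappa> * (p - 1))))" using CC h K(1) by blast
      then show "(\<theta> > 0 \<longrightarrow> T \<le> C * \<delta> powr (- 1 / \<theta>) * (ln (1 / \<delta>)) powr (\<kappa> / \<theta>))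
      \<and> (\<theta> = 0 \<and> \<kappa> < 1 / (p - 1) \<longrightarrow>
           T \<le> exp (C * \<delta> powr (- (p - 1) / (1 - \<kappa> * (p - 1)))))
      \<and> (\<theta> = 0 \<and> \<kappa> = 1 / (p - 1) \<longrightarrow>
           T \<le> exp (exp (C * \<delta> powr (- (p - 1)))))" using 2 by simp
    qed
  next
    case 3
    have b: "\<kappa> * (p - 1) = 1" using 3 p by (simp add: field_simps)
    have Q: "cst p / C0 powr p > 0" using cst_pos[OF p] C0 by simp
    have a: "ln (2 * R0) > 0" using R0 by simp
    have ln4: "ln (4::real) > 0" by simp
    obtain C where C: "C > 0" and CC: "\<And>\<delta> K T. 0 < \<delta> \<and> \<delta> < 1 \<and> T \<le> 4 ^ (K + 1) * R0
      \<and> (\<Sum>k<K. (cst p / C0 powr p) * (ln (2 * R0) + real k * ln 4) powr (- 1)) \<le> \<delta> powr (1 - p)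
      \<Longrightarrow> T \<le> exp (exp (C * \<delta> powr (- (p - 1))))"
      using final_beta1[OF p Q a ln4 R0(1)] by auto
    show ?thesis
    proof (rule exI[of _ C], rule conjI[OF C], rule exI[of _ 1], rule conjI[OF zero_less_one], intro allI impI)
      fix \<delta> T w assume h: "0 < \<delta> \<and> \<delta> < 1 \<and> T > R1
    \<and> (\<forall>x\<in>Omega. \<forall>t. 0 \<le> t \<and> t < T \<longrightarrow> 0 \<le> w x t)
    \<and> (\<forall>T'. 0 \<le> T' \<and> T' < T \<longrightarrow>
           set_integrable lborel (Omega \<times> {0..T'}) (\<lambda>(x, t). w x t))
    \<and> (\<forall>R. R1 \<le> R \<and> R < T \<and> 1 < R \<longrightarrow>
          \<delta> + (\<integral>z\<in>PR R. w (fst z) (snd z) * psiR \<eta> p R (fst z) (snd z) \<partial>lborel)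
          \<le> C0 * R powr (- \<theta> / conj_exp p) * (ln R) powr (\<kappa> / conj_exp p)
            * (\<integral>z\<in>PR R. w (fst z) (snd z) * psiR_star \<eta> p R (fst z) (snd z) \<partial>lborel)
                powr (1 / p))"
      then have "Hyp \<delta> T w" unfolding Hyp_def by blast
      from key[OF this] obtain K where K: "T \<le> 4 ^ (K + 1) * R0"
        "(\<Sum>k<K. cst p / (C0 * (2 * (4 ^ k * R0)) powr (- \<theta> / conj_exp p)
            * (ln (2 * (4 ^ k * R0))) powr (\<kappa> / conj_exp p)) powr p) \<le> \<delta> powr (1 - p)" by blast
      have "(\<Sum>k<K. (cst p / C0 powr p) * (ln (2 * R0) + real k * ln 4) powr (- (\<kappa> * (p - 1)))) \<le> \<delta> powr (1 - p)"
        using K(2) unfolding 3(1) term_rewrite[OF p C0 R0(1)] .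
      then have "(\<Sum>k<K. (cst p / C0 powr p) * (ln (2 * R0) + real k * ln 4) powr (- 1)) \<le> \<delta> powr (1 - p)"
        unfolding b .
      then have "T \<le> exp (exp (C * \<delta> powr (- (p - 1))))" using CC h K(1) by blast
      then show "(\<theta> > 0 \<longrightarrow> T \<le> C * \<delta> powr (- 1 / \<theta>) * (ln (1 / \<delta>)) powr (\<kappa> / \<theta>))
      \<and> (\<theta> = 0 \<and> \<kappa> < 1 / (p - 1) \<longrightarrow>
           T \<le> exp (C * \<delta> powr (- (p - 1) / (1 - \<kappa> * (p - 1)))))
      \<and> (\<theta> = 0 \<and> \<kappa> = 1 / (p - 1) \<longrightarrow>
           T \<le> exp (exp (C * \<delta> powr (- (p - 1)))))" using 3 by simp
    qed
  next
    case 4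
    show ?thesis
      by (rule exI[of _ 1], rule conjI[OF zero_less_one], rule exI[of _ 1], rule conjI[OF zero_less_one])
         (use 4 in auto)
  qed
qed

end
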